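(* Under the hypotheses of Theorem 3, Theorem 4, or Theorem 5 below, the point $(\theta^*,\theta^* )$ is uniformly globally exponentially stable for the respective system, i.e., there exist $c,\alpha>0$ with $|x(t)-(\theta^*,\theta^* )|\le c|x_\circ-(\theta^*,\theta^* )|e^{-\alpha(t-t_\circ)}$ for all solutions and all $t\ge t_\circ$. The three settings are: with $\theta^*\in\mathbb{R}^n$, $\phi:\mathbb{R}_{\ge0}\to\mathbb{R}^n$ piecewise continuous and bounded, $y^*=\phi^T\theta^*$, samples $t_1,\dots,t_N$ with $[\phi(t_1),\dots,\phi(t_N)]$ of rank $n$, $\mathcal{N}_t=1+\mu\phi^T\phi$, $B(\theta,\mu)=\sum_k\frac{\phi(t_k)}{1+\mu|\phi(t_k)|^2}(\phi^T(t_k)\theta-y^*(t_k))$: (i) $\dot\theta=-\beta(\theta-\vartheta)\mathcal{N}_t$, $\dot\vartheta=-\gamma(\phi(\phi^T\theta-y^* )+\mathcal{N}_tB(\theta,\mu))$ with $\beta,\gamma,\mu>0$, $\beta\ge2\gamma/\mu$; (ii) $\dot\theta=-\beta(\theta-\vartheta)$, $\dot\vartheta=-\gamma(\mathcal{N}_t^{-1}\phi(\phi^T\theta-y^* )+B(\theta,\mu))$ with $\beta,\gamma,\mu>0$, $\beta\ge2\gamma/\mu$; (iii) $\dot\theta=-\beta(\theta-\vartheta)$, $\dot\vartheta=-\gamma B(\theta,\mu)$ with $\beta,\gamma>0$, $\mu\ge0$.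
   Context: $x=(\theta,\vartheta)\in\mathbb{R}^{2n}$, $|\cdot|$ the Euclidean norm. *)

theory Defs
  imports "HOL-Analysis.Analysis"
begin

definition piecewise_continuous_on_halfline :: "(real \<Rightarrow> 'a::topological_space) \<Rightarrow> bool" where
  "piecewise_continuous_on_halfline \<phi> \<longleftrightarrow>
     (\<forall>b\<ge>0. \<exists>S. finite S \<and>
        (\<forall>t\<in>{0..b} - S. continuous (at t within {0..}) \<phi>) \<and>
        (\<forall>s\<in>S. (s > 0 \<longrightarrow> (\<exists>l. (\<phi> \<longlongrightarrow> l) (at_left s))) \<and>
                 (\<exists>l. (\<phi> \<longlongrightarrow> l) (at_right s))))"

text \<open>Carath\'eodory solution on [t0,\<infinity>) of x' = f(t,x), x(t0) = x0 (integral form).\<close>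
definition is_solution ::
  "(real \<Rightarrow> 'a::euclidean_space \<Rightarrow> 'a) \<Rightarrow> real \<Rightarrow> 'a \<Rightarrow> (real \<Rightarrow> 'a) \<Rightarrow> bool" where
  "is_solution f t0 x0 x \<longleftrightarrow>
     x t0 = x0 \<and> (\<forall>t\<ge>t0. ((\<lambda>s. f s (x s)) has_integral (x t - x0)) {t0..t})"

definition UGES :: "(real \<Rightarrow> 'a::euclidean_space \<Rightarrow> 'a) \<Rightarrow> 'a \<Rightarrow> bool" where
  "UGES f xs \<longleftrightarrow>
     (\<exists>c>0. \<exists>\<alpha>>0. \<forall>t0 x0 x. t0 \<ge> 0 \<longrightarrow> is_solution f t0 x0 x \<longrightarrow>
        (\<forall>t\<ge>t0. norm (x t - xs) \<le> c * norm (x0 - xs) * exp (- \<alpha> * (t - t0))))"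

definition Nrm :: "(real \<Rightarrow> real^'n) \<Rightarrow> real \<Rightarrow> real \<Rightarrow> real" where
  "Nrm \<phi> \<mu> t = 1 + \<mu> * (\<phi> t \<bullet> \<phi> t)"

text \<open>B(theta,mu) = sum_k phi(t_k)/(1+mu|phi(t_k)|^2) (phi(t_k)^T theta - y*(t_k)), y* = phi^T theta*.\<close>
definition Bterm :: "(real \<Rightarrow> real^'n) \<Rightarrow> real^'n \<Rightarrow> nat \<Rightarrow> (nat \<Rightarrow> real) \<Rightarrow> real \<Rightarrow> real^'n \<Rightarrow> real^'n" where
  "Bterm \<phi> \<theta>s N ts \<mu> \<theta> =
     (\<Sum>k<N. (1 / (1 + \<mu> * (norm (\<phi> (ts k)))\<^sup>2)) *\<^sub>R
              ((\<phi> (ts k) \<bullet> \<theta> - \<phi> (ts k) \<bullet> \<theta>s) *\<^sub>R \<phi> (ts k)))"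

definition sys1 :: "(real \<Rightarrow> real^'n) \<Rightarrow> real^'n \<Rightarrow> nat \<Rightarrow> (nat \<Rightarrow> real) \<Rightarrow> real \<Rightarrow> real \<Rightarrow> real
     \<Rightarrow> real \<Rightarrow> ((real^'n) \<times> (real^'n)) \<Rightarrow> ((real^'n) \<times> (real^'n))" where
  "sys1 \<phi> \<theta>s N ts \<beta> \<gamma> \<mu> t x =
     (let \<theta> = fst x; \<theta>' = snd x in
      ((- \<beta> * Nrm \<phi> \<mu> t) *\<^sub>R (\<theta> - \<theta>'),
       (- \<gamma>) *\<^sub>R ((\<phi> t \<bullet> \<theta> - \<phi> t \<bullet> \<theta>s) *\<^sub>R \<phi> t + Nrm \<phi> \<mu> t *\<^sub>R Bterm \<phi> \<theta>s N ts \<mu> \<theta>)))"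

definition sys2 :: "(real \<Rightarrow> real^'n) \<Rightarrow> real^'n \<Rightarrow> nat \<Rightarrow> (nat \<Rightarrow> real) \<Rightarrow> real \<Rightarrow> real \<Rightarrow> real
     \<Rightarrow> real \<Rightarrow> ((real^'n) \<times> (real^'n)) \<Rightarrow> ((real^'n) \<times> (real^'n))" where
  "sys2 \<phi> \<theta>s N ts \<beta> \<gamma> \<mu> t x =
     (let \<theta> = fst x; \<theta>' = snd x in
      ((- \<beta>) *\<^sub>R (\<theta> - \<theta>'),
       (- \<gamma>) *\<^sub>R ((inverse (Nrm \<phi> \<mu> t) * (\<phi> t \<bullet> \<theta> - \<phi> t \<bullet> \<theta>s)) *\<^sub>R \<phi> t
                   + Bterm \<phi> \<theta>s N ts \<mu> \<theta>)))"

definition sys3 :: "(real \<Rightarrow> real^'n) \<Rightarrow> real^'n \<Rightarrow> nat \<Rightarrow> (nat \<Rightarrow> real) \<Rightarrow> real \<Rightarrow> real \<Rightarrow> real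
     \<Rightarrow> real \<Rightarrow> ((real^'n) \<times> (real^'n)) \<Rightarrow> ((real^'n) \<times> (real^'n))" where
  "sys3 \<phi> \<theta>s N ts \<beta> \<gamma> \<mu> t x =
     (let \<theta> = fst x; \<theta>' = snd x in
      ((- \<beta>) *\<^sub>R (\<theta> - \<theta>'), (- \<gamma>) *\<^sub>R Bterm \<phi> \<theta>s N ts \<mu> \<theta>))"

end

theory Submission
  imports Defs
begin


lemma lyap_UGES:
  fixes F :: "real \<Rightarrow> 'a::euclidean_space \<Rightarrow> 'a" and V :: "'a \<Rightarrow> real"
  assumes reg: "\<And>b. b \<ge> 0 \<Longrightarrow> \<exists>S. finite S \<and> (\<forall>t\<in>{0..b}-S. \<forall>y. continuous (at t within {0..}) y \<longrightarrow> continuous (at t within {0..}) (\<lambda>s. F s (y s)))"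
  and Vder: "\<And>z. (V has_derivative DV z) (at z)"
  and dec: "\<And>s z. s \<ge> 0 \<Longrightarrow> DV z (F s z) \<le> - c * V z"
  and c: "c > 0" and m: "m > 0"
  and low: "\<And>z. m * (norm (z - xs))\<^sup>2 \<le> V z" and up: "\<And>z. V z \<le> K * (norm (z - xs))\<^sup>2"
  shows "UGES F xs"
proof -
  have Vnn: "V z \<ge> 0" for z
  proof -
    have "0 \<le> m * (norm (z-xs))\<^sup>2" using m by simp
    then show ?thesis using low[of z] by linarith
  qed
  have Kpos: "K > 0"
  proof -
    obtain z :: 'a where "z \<in> Basis" using nonempty_Basis by blast
    then have "z \<noteq> 0" using nonzero_Basis by blast
    have "m * (norm (z + xs - xs))\<^sup>2 \<le> K * (norm (z + xs - xs))\<^sup>2" using low[of "z+xs"] up[of "z+xs"] by linarith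
    then have "m \<le> K" using \<open>z \<noteq> 0\<close> by simp
    with m show ?thesis by simp
  qed
  show ?thesis unfolding UGES_def
  proof (rule exI[of _ "sqrt (K/m)"], rule conjI, goal_cases)
    case 1 show ?case using Kpos m by simp
  next
    case 2 show ?case
    proof (rule exI[of _ "c/2"], intro conjI allI impI)
    show "c/2 > 0" using c by simp
    fix t0 x0 x T assume t0: "0 \<le> t0" and sol: "is_solution F t0 x0 x" and T: "t0 \<le> T"
    define g where "g s = F s (x s)" for s
    have x0: "x t0 = x0" using sol unfolding is_solution_def by simp
    have hi: "(g has_integral (x t - x0)) {t0..t}" if "t \<ge> t0" for t
      using sol that unfolding is_solution_def g_def by simp
    have gi: "g integrable_on {t0..T}" using hi[OF T] by blast
    have xeq: "x s = x0 + integral {t0..s} g" if "s \<in> {t0..T}" for s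
    proof -
      have "(g has_integral (x s - x0)) {t0..s}" using hi that by auto
      then have "integral {t0..s} g = x s - x0" by (rule integral_unique)
      then show ?thesis by simp
    qed
    have xcont: "continuous_on {t0..T} x"
    proof -
      have "continuous_on {t0..T} (\<lambda>s. x0 + integral {t0..s} g)"
        by (intro continuous_intros indefinite_integral_continuous_1 gi)
      then show ?thesis by (rule continuous_on_eq) (use xeq in auto)
    qed
    obtain S where S: "finite S" "\<forall>t\<in>{0..T}-S. \<forall>y. continuous (at t within {0..}) y \<longrightarrow> continuous (at t within {0..}) (\<lambda>s. F s (y s))"
      using reg[of T] t0 T by auto
    have xder: "(x has_vector_derivative g t) (at t)" if t: "t \<in> {t0<..<T} - S" for t
    proof -
      have int: "t \<in> interior {t0..T}" using t by simp
      have xc: "continuous (at t) x" using xcont int by (rule continuous_on_interior)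
      have tS: "t \<in> {0..T} - S" using t t0 by auto
      have gc0: "continuous (at t within {0..}) g"
        using S(2) tS continuous_at_imp_continuous_at_within[OF xc] unfolding g_def by blast
      have i0: "t \<in> interior {0::real..}" using t t0 by simp
      from gc0 have gc: "continuous (at t) g" unfolding at_within_interior[OF i0] .
      have "((\<lambda>u. integral {t0..u} g) has_vector_derivative g t) (at t within ({t0..T} - {}))"
        apply (rule integral_has_vector_derivative_continuous_at[OF gi])
        using t gc continuous_at_imp_continuous_at_within by auto
      then have "((\<lambda>u. x0 + integral {t0..u} g) has_vector_derivative g t) (at t within {t0..T})"
        by (auto intro!: derivative_eq_intros)
      then have "(x has_vector_derivative g t) (at t within {t0..T})"
        by (rule has_vector_derivative_transform[rotated 2]) (use t xeq in auto)
      then show ?thesis unfolding at_within_interior[OF int] .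
    qed
    define h where "h s = V (x s) * exp (c * (s - t0))" for s
    define h' where "h' s = DV (x s) (g s) * exp (c * (s - t0)) + V (x s) * (c * exp (c * (s - t0)))" for s
    have hder: "(h has_vector_derivative h' t) (at t)" if t: "t \<in> {t0<..<T} - S" for t
    proof -
      have "((\<lambda>s. V (x s)) has_derivative (\<lambda>u. DV (x t) (u *\<^sub>R g t))) (at t)"
        using has_derivative_compose[OF xder[OF t, unfolded has_vector_derivative_def] Vder] by (simp add: o_def)
      moreover have "linear (DV (x t))" using Vder has_derivative_linear by blast
      moreover have "(\<lambda>u. DV (x t) (u *\<^sub>R g t)) = (*) (DV (x t) (g t))"
        using linear_cmul[OF \<open>linear (DV (x t))\<close>] by (auto simp: mult.commute)
      ultimately have "((\<lambda>s. V (x s)) has_real_derivative DV (x t) (g t)) (at t)"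
        unfolding has_field_derivative_def by simp
      then show ?thesis unfolding h_def h'_def has_real_derivative_iff_has_vector_derivative[symmetric]
        by (auto intro!: derivative_eq_intros)
    qed
    have hcont: "continuous_on {t0..T} h" unfolding h_def
    proof (intro continuous_intros continuous_on_compose2[OF _ xcont, of UNIV V])
      show "continuous_on UNIV V"
        using Vder has_derivative_continuous continuous_at_imp_continuous_on by blast
    qed auto
    have hint: "(h' has_integral (h T - h t0)) {t0..T}"
      by (rule fundamental_theorem_of_calculus_interior_strong[OF S(1) T hder hcont])
    have "h' s \<le> 0" if "s \<in> {t0..T}" for s
    proof -
      have "DV (x s) (g s) \<le> - c * V (x s)" unfolding g_def using dec that t0 by auto
      moreover have "h' s = exp (c * (s - t0)) * (DV (x s) (g s) + c * V (x s))"
        unfolding h'_def by (simp add: algebra_simps)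
      ultimately show ?thesis by (simp add: mult_nonneg_nonpos)
    qed
    then have "h T - h t0 \<le> 0"
      using has_integral_le[OF hint has_integral_0] by auto
    then have hT: "V (x T) * exp (c * (T - t0)) \<le> V x0" unfolding h_def using x0 by simp
    have e: "exp (c * (T - t0)) * exp (- c * (T - t0)) = 1" by (simp add: exp_add[symmetric])
    have "V (x T) = (V (x T) * exp (c * (T - t0))) * exp (- c * (T - t0))"
      using e by (simp only: mult.assoc)
    also have "\<dots> \<le> V x0 * exp (- c * (T - t0))"
      by (rule mult_right_mono[OF hT]) simp
    also have "\<dots> \<le> K * (norm (x0 - xs))\<^sup>2 * exp (- c * (T - t0))"
      using up by (simp add: mult_right_mono)
    finally have "m * (norm (x T - xs))\<^sup>2 \<le> K * (norm (x0 - xs))\<^sup>2 * exp (- c * (T - t0))"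
      using low[of "x T"] by linarith
    then have "(norm (x T - xs))\<^sup>2 \<le> (K/m) * (norm (x0 - xs))\<^sup>2 * exp (- c * (T - t0))"
      using m by (simp add: field_simps)
    also have "\<dots> = (sqrt (K/m) * norm (x0 - xs) * exp (- (c/2) * (T - t0)))\<^sup>2"
    proof -
      have ee: "(exp (- (c/2) * (T - t0)))\<^sup>2 = exp (- c * (T - t0))"
        unfolding power2_eq_square exp_add[symmetric] by (simp add: algebra_simps)
      have "(sqrt (K/m))\<^sup>2 = K/m" using Kpos m by simp
      then show ?thesis unfolding power_mult_distrib ee by simp
    qed
    finally show "norm (x T - xs) \<le> sqrt (K/m) * norm (x0 - xs) * exp (- (c/2) * (T - t0))"
      by (rule power2_le_imp_le) (use Kpos m in auto)
  qed
  qed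
qed



lemma span_full: fixes S :: "(real^'n) set" assumes "dim S = CARD('n)" shows "span S = UNIV"
  using assms dim_eq_full by (metis DIM_cart DIM_real mult_1_right)

definition wt :: "(real \<Rightarrow> real^'n) \<Rightarrow> (nat \<Rightarrow> real) \<Rightarrow> real \<Rightarrow> nat \<Rightarrow> real" where
  "wt \<phi> ts \<mu> k = 1 / (1 + \<mu> * (norm (\<phi> (ts k)))\<^sup>2)"

definition Bl :: "(real \<Rightarrow> real^'n) \<Rightarrow> nat \<Rightarrow> (nat \<Rightarrow> real) \<Rightarrow> real \<Rightarrow> real^'n \<Rightarrow> real^'n" where
  "Bl \<phi> N ts \<mu> e = (\<Sum>k<N. wt \<phi> ts \<mu> k *\<^sub>R ((\<phi> (ts k) \<bullet> e) *\<^sub>R \<phi> (ts k)))"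

lemma Bl_inner: "Bl \<phi> N ts \<mu> e \<bullet> h = (\<Sum>k<N. wt \<phi> ts \<mu> k * (\<phi> (ts k) \<bullet> e) * (\<phi> (ts k) \<bullet> h))"
  by (simp add: Bl_def inner_sum_left mult.assoc)

lemma Bl_sym: "Bl \<phi> N ts \<mu> e \<bullet> h = Bl \<phi> N ts \<mu> h \<bullet> e"
  unfolding Bl_inner by (simp add: mult_ac)

lemma Bl_linear: "linear (Bl \<phi> N ts \<mu>)"
  by (rule linearI) (simp_all add: Bl_def inner_add_right scaleR_add_left scaleR_add_right sum.distrib scaleR_sum_right mult.left_commute)

lemma Bterm_Bl: "Bterm \<phi> \<theta>s N ts \<mu> \<theta> = Bl \<phi> N ts \<mu> (\<theta> - \<theta>s)"
  by (simp add: Bterm_def Bl_def wt_def inner_diff_right)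

lemma wt_pos: "\<mu> \<ge> 0 \<Longrightarrow> wt \<phi> ts \<mu> k > 0"
  unfolding wt_def by (simp add: add_pos_nonneg)

lemma Bl_q: "Bl \<phi> N ts \<mu> e \<bullet> e = (\<Sum>k<N. wt \<phi> ts \<mu> k * (\<phi> (ts k) \<bullet> e)\<^sup>2)"
  unfolding Bl_inner by (simp add: power2_eq_square mult.assoc)

lemma Bl_q_nonneg: "\<mu> \<ge> 0 \<Longrightarrow> Bl \<phi> N ts \<mu> e \<bullet> e \<ge> 0"
  unfolding Bl_q by (intro sum_nonneg) (simp add: wt_pos less_imp_le)

lemma Bl_q_upper: assumes "\<mu> \<ge> 0"
  shows "Bl \<phi> N ts \<mu> e \<bullet> e \<le> (\<Sum>k<N. wt \<phi> ts \<mu> k * (\<phi> (ts k) \<bullet> \<phi> (ts k))) * (e \<bullet> e)"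
  unfolding Bl_q sum_distrib_right
proof (intro sum_mono)
  fix k
  have "(\<phi> (ts k) \<bullet> e)\<^sup>2 \<le> (\<phi> (ts k) \<bullet> \<phi> (ts k)) * (e \<bullet> e)" by (rule Cauchy_Schwarz_ineq)
  then show "wt \<phi> ts \<mu> k * (\<phi> (ts k) \<bullet> e)\<^sup>2 \<le> wt \<phi> ts \<mu> k * (\<phi> (ts k) \<bullet> \<phi> (ts k)) * (e \<bullet> e)"
    using wt_pos[OF assms, of \<phi> ts k] by (simp add: mult.assoc mult_left_mono)
qed

lemma Bl_q_lower:
  assumes mu: "\<mu> \<ge> 0" and rank: "dim ((\<lambda>k. \<phi> (ts k)) ` {..<N}) = CARD('n)"
  shows "\<exists>a0>0. \<forall>e::real^'n. a0 * (e \<bullet> e) \<le> Bl \<phi> N ts \<mu> e \<bullet> e"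
proof -
  let ?Q = "\<lambda>e. Bl \<phi> N ts \<mu> e \<bullet> e"
  have lin: "linear (Bl \<phi> N ts \<mu>)" by (rule Bl_linear)
  have cont: "continuous_on (sphere 0 1) ?Q"
    using lin linear_continuous_on linear_conv_bounded_linear
    by (intro continuous_intros) auto
  have ne: "sphere (0::real^'n) 1 \<noteq> {}" by simp
  obtain e0 where e0: "e0 \<in> sphere 0 1" and min: "\<And>y. y \<in> sphere 0 1 \<Longrightarrow> ?Q e0 \<le> ?Q y"
    using continuous_attains_inf[OF compact_sphere ne cont] by blast
  have pos: "?Q e0 > 0"
  proof (rule ccontr)
    assume "\<not> ?Q e0 > 0"
    then have "?Q e0 = 0" using Bl_q_nonneg[OF mu] by (meson antisym not_less)
    moreover have nn: "\<forall>k\<in>{..<N}. 0 \<le> wt \<phi> ts \<mu> k * (\<phi> (ts k) \<bullet> e0)\<^sup>2"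
      using wt_pos[OF mu] by (meson less_imp_le mult_nonneg_nonneg zero_le_power2)
    ultimately have "\<forall>k\<in>{..<N}. wt \<phi> ts \<mu> k * (\<phi> (ts k) \<bullet> e0)\<^sup>2 = 0"
      unfolding Bl_q using sum_nonneg_eq_0_iff[of "{..<N}", OF _ nn[rule_format]] by simp
    then have orth: "\<forall>k<N. \<phi> (ts k) \<bullet> e0 = 0" using wt_pos[OF mu] by (metis lessThan_iff mult_eq_0_iff order_less_irrefl power_eq_0_iff)
    have "e0 \<in> span ((\<lambda>k. \<phi> (ts k)) ` {..<N})" using span_full[OF rank] by simp
    then have "orthogonal e0 e0"
      by (rule orthogonal_to_span) (use orth in \<open>auto simp: orthogonal_def inner_commute\<close>)
    then show False using e0 by (simp add: orthogonal_def)
  qed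
  show ?thesis
  proof (intro exI[of _ "?Q e0"] conjI allI pos)
    fix e :: "real^'n"
    show "?Q e0 * (e \<bullet> e) \<le> ?Q e"
    proof (cases "e = 0")
      case True then show ?thesis by (simp add: linear_0[OF lin])
    next
      case False
      define u where "u = (1 / norm e) *\<^sub>R e"
      have u: "u \<in> sphere 0 1" using False by (simp add: u_def)
      have "?Q e = (norm e)\<^sup>2 * ?Q u"
        using False unfolding u_def linear_cmul[OF lin] by (simp add: power2_eq_square)
      moreover have "e \<bullet> e = (norm e)\<^sup>2" by (simp add: power2_norm_eq_inner)
      ultimately show ?thesis using min[OF u] by (simp add: mult.commute mult_left_mono)
    qed
  qed
qed



definition Vf :: "real \<Rightarrow> real \<Rightarrow> (real \<Rightarrow> real^'n) \<Rightarrow> real^'n \<Rightarrow> nat \<Rightarrow> (nat \<Rightarrow> real) \<Rightarrow> real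
   \<Rightarrow> ((real^'n) \<times> (real^'n)) \<Rightarrow> real" where
  "Vf \<beta> \<gamma> \<phi> \<theta>s N ts \<mu> z =
    \<beta> * ((snd z - \<theta>s - (1/2) *\<^sub>R (fst z - \<theta>s)) \<bullet> (snd z - \<theta>s - (1/2) *\<^sub>R (fst z - \<theta>s)))
    + \<beta>/4 * ((fst z - \<theta>s) \<bullet> (fst z - \<theta>s)) + \<gamma> * (Bl \<phi> N ts \<mu> (fst z - \<theta>s) \<bullet> (fst z - \<theta>s))"

definition DVf :: "real \<Rightarrow> real \<Rightarrow> (real \<Rightarrow> real^'n) \<Rightarrow> real^'n \<Rightarrow> nat \<Rightarrow> (nat \<Rightarrow> real) \<Rightarrow> real
   \<Rightarrow> ((real^'n) \<times> (real^'n)) \<Rightarrow> ((real^'n) \<times> (real^'n)) \<Rightarrow> real" where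
  "DVf \<beta> \<gamma> \<phi> \<theta>s N ts \<mu> z h =
    2 * \<beta> * ((snd z - \<theta>s - (1/2) *\<^sub>R (fst z - \<theta>s)) \<bullet> (snd h - (1/2) *\<^sub>R fst h))
    + \<beta>/2 * ((fst z - \<theta>s) \<bullet> fst h) + 2 * \<gamma> * (Bl \<phi> N ts \<mu> (fst z - \<theta>s) \<bullet> fst h)"

lemma arith3: "(b::real)*(x+x) + b/4*(y+y) + g*(w+w) = 2*b*x + b/2*y + 2*g*w"
  by (simp add: algebra_simps)

lemma Vf_deriv: "(Vf \<beta> \<gamma> \<phi> \<theta>s N ts \<mu> has_derivative DVf \<beta> \<gamma> \<phi> \<theta>s N ts \<mu> z) (at z)"
proof -
  have bl: "bounded_linear (Bl \<phi> N ts \<mu>)" using Bl_linear linear_conv_bounded_linear by blast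
  show ?thesis
    unfolding Vf_def[abs_def] DVf_def[abs_def]
    apply (rule derivative_eq_intros bounded_linear.has_derivative[OF bl] refl)+
    apply (rule ext)
    subgoal for h
      apply (simp only: diff_zero)
      apply (subst Bl_sym[of \<phi> N ts \<mu> "fst h"])
      apply (subst inner_commute[of "snd h - (1/2) *\<^sub>R fst h"])
      apply (subst inner_commute[of "fst h"])
      apply (rule arith3)
      done
    done
qed



lemma dec_core:
  fixes \<beta> \<gamma> a0 c q ee uu gg D :: real
  assumes b: "\<beta> > 0" and g: "\<gamma> > 0" and a0: "a0 > 0" and c1: "c \<le> \<beta>/4" and c2: "c \<le> 2*\<gamma>*a0/3"
    and c0: "c \<ge> 0" and q: "q \<ge> a0 * ee" and ee: "ee \<ge> 0" and uu: "uu \<ge> 0"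
    and gg: "gg \<le> 2*uu + ee/2" and D: "D \<le> -(\<beta>\<^sup>2/2)*uu - \<beta>*\<gamma>*q"
  shows "D \<le> - c * (\<beta>*gg + \<beta>/4*ee + \<gamma>*q)"
proof -
  have q0: "q \<ge> 0" using q a0 ee by (meson mult_nonneg_nonneg order_trans less_imp_le)
  have h1: "c*\<beta>*gg \<le> c*\<beta>*(2*uu + ee/2)" using gg c0 b by (simp add: mult_left_mono)
  have h2': "c*(\<beta>*(2*uu)) \<le> (\<beta>/4)*(\<beta>*(2*uu))" by (rule mult_right_mono[OF c1]) (use b uu in simp)
  then have h2: "c*\<beta>*(2*uu) \<le> (\<beta>/4)*\<beta>*(2*uu)" by (simp add: mult.assoc)
  have h3: "c*(3*\<beta>/4*ee) \<le> (2*\<gamma>*a0/3)*(3*\<beta>/4*ee)" by (rule mult_right_mono[OF c2]) (use b ee in simp)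
  have h4: "(2*\<gamma>*a0/3)*(3*\<beta>/4*ee) = \<beta>*\<gamma>/2*(a0*ee)" by (simp add: algebra_simps)
  have h5: "\<beta>*\<gamma>/2*(a0*ee) \<le> \<beta>*\<gamma>/2*q" using q b g by (simp add: mult_left_mono)
  have h6: "c*(\<gamma>*q) \<le> \<beta>/4*(\<gamma>*q)" by (rule mult_right_mono[OF c1]) (use g q0 in simp)
  have e1: "c * (\<beta>*gg + \<beta>/4*ee + \<gamma>*q) = c*\<beta>*gg + c*(\<beta>/4*ee) + c*(\<gamma>*q)" by (simp add: algebra_simps)
  have e2: "c*\<beta>*(2*uu + ee/2) = c*\<beta>*(2*uu) + c*(\<beta>/2*ee)" by (simp add: algebra_simps)
  have e3: "c*(\<beta>/2*ee) + c*(\<beta>/4*ee) = c*(3*\<beta>/4*ee)" by (simp add: algebra_simps)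
  have e4: "(\<beta>/4)*\<beta>*(2*uu) = (\<beta>\<^sup>2/2)*uu" by (simp add: power2_eq_square)
  have e5: "\<beta>/4*(\<gamma>*q) + \<beta>*\<gamma>/2*q \<le> \<beta>*\<gamma>*q" using b g q0 by (simp add: algebra_simps)
  show ?thesis using h1 h2 h3 h4 h5 h6 e1 e2 e3 e4 e5 D by argo
qed

lemma cross_core:
  fixes \<beta> \<gamma> N pp uu a1 b1 :: real
  assumes b: "\<beta> > 0" and g: "\<gamma> > 0" and N: "N \<ge> 1" and pN: "2*\<gamma>*pp \<le> \<beta>*N"
    and cs: "(b1 - a1)\<^sup>2 \<le> pp*uu" and uu: "uu \<ge> 0"
  shows "- \<beta>*\<gamma>*(2*a1*b1 - a1\<^sup>2)/N \<le> (\<beta>\<^sup>2/2)*uu"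
proof -
  have Np: "N > 0" using N by simp
  have "- (2*a1*b1 - a1\<^sup>2) \<le> (b1 - a1)\<^sup>2" by (simp add: power2_eq_square algebra_simps)
  also have "\<dots> \<le> pp*uu" by (rule cs)
  finally have s: "- (2*a1*b1 - a1\<^sup>2) \<le> pp*uu" .
  have "\<beta>*\<gamma>*(- (2*a1*b1 - a1\<^sup>2)) \<le> \<beta>*\<gamma>*(pp*uu)"
    by (rule mult_left_mono[OF s]) (use b g in simp)
  then have "- \<beta>*\<gamma>*(2*a1*b1 - a1\<^sup>2) \<le> \<beta>*\<gamma>*(pp*uu)" by (simp add: algebra_simps)
  also have "\<dots> = \<beta>*(\<gamma>*pp)*uu" by simp
  also have "\<dots> \<le> \<beta>*(\<beta>*N/2)*uu" using pN b uu by (intro mult_right_mono mult_left_mono) auto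
  finally have "- \<beta>*\<gamma>*(2*a1*b1 - a1\<^sup>2) \<le> (\<beta>\<^sup>2/2)*uu * N" by (simp add: power2_eq_square algebra_simps)
  then show ?thesis by (simp only: pos_divide_le_eq[OF Np])
qed

lemma low_scalar:
  fixes \<beta> \<gamma> q ee ef ff :: real
  assumes b: "\<beta> > 0" and g: "\<gamma> \<ge> 0" and q: "q \<ge> 0" and w: "0 \<le> ff - 6/5*ef + 9/25*ee" and ee: "ee \<ge> 0"
  shows "\<beta>/6*(ee+ff) \<le> \<beta>*(ff - ef + ee/4) + \<beta>/4*ee + \<gamma>*q"
proof -
  have s: "0 \<le> 5/6*ff - ef + 1/3*ee" using w ee by linarith
  have "0 \<le> \<beta>*(5/6*ff - ef + 1/3*ee)" using s b by simp
  moreover have "0 \<le> \<gamma>*q" using g q by simp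
  moreover have "\<beta>*(ff - ef + ee/4) + \<beta>/4*ee - \<beta>/6*(ee+ff) = \<beta>*(5/6*ff - ef + 1/3*ee)"
    by (simp add: field_simps)
  ultimately show ?thesis by linarith
qed

lemma up_scalar:
  fixes \<beta> \<gamma> q ee ef ff am :: real
  assumes b: "\<beta> > 0" and g: "\<gamma> \<ge> 0" and q: "q \<le> am*ee" and am: "am \<ge> 0" and w: "0 \<le> ff + ef + ee/4" and ee: "ee \<ge> 0" and ff: "ff \<ge> 0"
  shows "\<beta>*(ff - ef + ee/4) + \<beta>/4*ee + \<gamma>*q \<le> (3*\<beta> + \<gamma>*am)*(ee+ff)"
proof -
  have "\<gamma>*q \<le> \<gamma>*(am*ee)" using q g by (simp add: mult_left_mono)
  moreover have "0 \<le> \<gamma>*am*ff" using g am ff by simp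
  moreover have "0 \<le> \<beta>*(ff + ef + ee/4)" using w b by simp
  moreover have "0 \<le> \<beta>*ee" "0 \<le> \<beta>*ff" using b ee ff by auto
  moreover have "(3*\<beta> + \<gamma>*am)*(ee+ff) - (\<beta>*(ff - ef + ee/4) + \<beta>/4*ee + \<gamma>*(am*ee))
     = \<beta>*(ff + ef + ee/4) + 9/4*\<beta>*ee + \<beta>*ff + \<gamma>*am*ff" by (simp add: field_simps)
  ultimately show ?thesis by linarith
qed



lemma inner_sq_expand: "(f - a *\<^sub>R e) \<bullet> (f - a *\<^sub>R e) = f \<bullet> f - 2*a*(e \<bullet> f) + a\<^sup>2*(e \<bullet> e)"
  for e f :: "'a::real_inner"
  by (simp add: inner_diff_left inner_diff_right inner_commute[of f e] power2_eq_square algebra_simps)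

lemma D_sys2:
  fixes \<phi> :: "real \<Rightarrow> real^'n" and \<theta>s :: "real^'n" and z :: "(real^'n) \<times> (real^'n)"
  assumes NN: "NN = Nrm \<phi> \<mu> s" and NN0: "NN \<noteq> 0"
  defines "e \<equiv> fst z - \<theta>s" and "f \<equiv> snd z - \<theta>s" and "p \<equiv> \<phi> s"
  shows "DVf \<beta> \<gamma> \<phi> \<theta>s N ts \<mu> z (sys2 \<phi> \<theta>s N ts \<beta> \<gamma> \<mu> s z)
     = - \<beta>\<^sup>2 * (f \<bullet> f - 2*(e \<bullet> f) + e \<bullet> e)
       - \<beta>*\<gamma>*(2*(p \<bullet> e)*(p \<bullet> f) - (p \<bullet> e)\<^sup>2) * inverse NN
       - \<beta>*\<gamma>*(Bl \<phi> N ts \<mu> e \<bullet> e)"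
proof -
  have z1: "fst z = e + \<theta>s" and z2: "snd z = f + \<theta>s" by (simp_all add: e_def f_def)
  have "sys2 \<phi> \<theta>s N ts \<beta> \<gamma> \<mu> s z = ((- \<beta>) *\<^sub>R (e - f), (- \<gamma>) *\<^sub>R ((inverse NN * (p \<bullet> e)) *\<^sub>R p + Bl \<phi> N ts \<mu> e))"
    unfolding sys2_def Let_def Bterm_Bl NN z1 z2 p_def by (simp add: inner_add_right algebra_simps)
  then show ?thesis
    unfolding DVf_def z1 z2
    apply (simp add: inner_add_left inner_add_right inner_diff_left inner_diff_right
       inner_commute[of f e] inner_commute[of e p] inner_commute[of f p]
       inner_commute[of f "Bl \<phi> N ts \<mu> e"] inner_commute[of e "Bl \<phi> N ts \<mu> e"])
    apply (simp add: power2_eq_square algebra_simps)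
    apply (simp add: field_simps)
    done
qed



lemma D_sys3:
  fixes \<phi> :: "real \<Rightarrow> real^'n" and \<theta>s :: "real^'n" and z :: "(real^'n) \<times> (real^'n)"
  defines "e \<equiv> fst z - \<theta>s" and "f \<equiv> snd z - \<theta>s"
  shows "DVf \<beta> \<gamma> \<phi> \<theta>s N ts \<mu> z (sys3 \<phi> \<theta>s N ts \<beta> \<gamma> \<mu> s z)
     = - \<beta>\<^sup>2 * (f \<bullet> f - 2*(e \<bullet> f) + e \<bullet> e) - \<beta>*\<gamma>*(Bl \<phi> N ts \<mu> e \<bullet> e)"
proof -
  have z1: "fst z = e + \<theta>s" and z2: "snd z = f + \<theta>s" by (simp_all add: e_def f_def)
  have "sys3 \<phi> \<theta>s N ts \<beta> \<gamma> \<mu> s z = ((- \<beta>) *\<^sub>R (e - f), (- \<gamma>) *\<^sub>R Bl \<phi> N ts \<mu> e)"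
    unfolding sys3_def Let_def Bterm_Bl z1 z2 by (simp add: algebra_simps)
  then show ?thesis
    unfolding DVf_def z1 z2
    apply (simp add: inner_add_left inner_add_right inner_diff_left inner_diff_right
       inner_commute[of f e] 
       inner_commute[of f "Bl \<phi> N ts \<mu> e"] inner_commute[of e "Bl \<phi> N ts \<mu> e"])
    apply (simp add: power2_eq_square algebra_simps)
    apply (simp add: field_simps)
    done
qed

lemma sys1_sys2:
  fixes \<phi> :: "real \<Rightarrow> real^'n"
  assumes "Nrm \<phi> \<mu> s \<noteq> 0"
  shows "sys1 \<phi> \<theta>s N ts \<beta> \<gamma> \<mu> s z = Nrm \<phi> \<mu> s *\<^sub>R sys2 \<phi> \<theta>s N ts \<beta> \<gamma> \<mu> s z"
proof -
  have i1: "\<And>x. Nrm \<phi> \<mu> s * (inverse (Nrm \<phi> \<mu> s) * x) = x" using assms by simp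
  have i2: "\<And>x. Nrm \<phi> \<mu> s * (x * inverse (Nrm \<phi> \<mu> s)) = x" using assms by simp
  show ?thesis unfolding sys1_def sys2_def Let_def
    by (simp add: scaleR_add_right algebra_simps i1 i2)
qed

lemma DVf_linear: "linear (DVf \<beta> \<gamma> \<phi> \<theta>s N ts \<mu> z)"
  using Vf_deriv has_derivative_linear by blast

lemma Vf_expand:
  fixes \<phi> :: "real \<Rightarrow> real^'n" and \<theta>s :: "real^'n" and z :: "(real^'n) \<times> (real^'n)"
  defines "e \<equiv> fst z - \<theta>s" and "f \<equiv> snd z - \<theta>s"
  shows "Vf \<beta> \<gamma> \<phi> \<theta>s N ts \<mu> z = \<beta> * ((f - (1/2) *\<^sub>R e) \<bullet> (f - (1/2) *\<^sub>R e)) + \<beta>/4 * (e \<bullet> e) + \<gamma> * (Bl \<phi> N ts \<mu> e \<bullet> e)"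
  unfolding Vf_def e_def f_def by simp

lemma dec_common:
  fixes \<phi> :: "real \<Rightarrow> real^'n" and \<theta>s :: "real^'n" and z :: "(real^'n) \<times> (real^'n)"
  assumes b: "\<beta> > 0" and g: "\<gamma> > 0" and a0: "a0 > 0" and c1: "c \<le> \<beta>/4" and c2: "c \<le> 2*\<gamma>*a0/3"
    and c0: "c \<ge> 0" and ql: "\<And>e. a0 * (e \<bullet> e) \<le> Bl \<phi> N ts \<mu> e \<bullet> e"
    and D: "D \<le> -(\<beta>\<^sup>2/2)*((snd z - \<theta>s - (fst z - \<theta>s)) \<bullet> (snd z - \<theta>s - (fst z - \<theta>s))) - \<beta>*\<gamma>*(Bl \<phi> N ts \<mu> (fst z - \<theta>s) \<bullet> (fst z - \<theta>s))"
  shows "D \<le> - c * Vf \<beta> \<gamma> \<phi> \<theta>s N ts \<mu> z"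
proof -
  define e where "e = fst z - \<theta>s"
  define f where "f = snd z - \<theta>s"
  have gg: "(f - (1/2) *\<^sub>R e) \<bullet> (f - (1/2) *\<^sub>R e) \<le> 2*((f - e) \<bullet> (f - e)) + (e \<bullet> e)/2"
  proof -
    have "0 \<le> (f - (3/2) *\<^sub>R e) \<bullet> (f - (3/2) *\<^sub>R e)" by simp
    moreover have "(f - e) \<bullet> (f - e) = (f - 1 *\<^sub>R e) \<bullet> (f - 1 *\<^sub>R e)" by simp
    ultimately show ?thesis unfolding inner_sq_expand by (simp add: power2_eq_square)
  qed
  show ?thesis unfolding Vf_expand e_def[symmetric] f_def[symmetric]
    by (rule dec_core[OF b g a0 c1 c2 c0 ql]) (use gg D in \<open>auto simp: e_def f_def\<close>)
qed

lemma dec3: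
  fixes \<phi> :: "real \<Rightarrow> real^'n" and \<theta>s :: "real^'n" and z :: "(real^'n) \<times> (real^'n)"
  assumes b: "\<beta> > 0" and g: "\<gamma> > 0" and a0: "a0 > 0" and c1: "c \<le> \<beta>/4" and c2: "c \<le> 2*\<gamma>*a0/3"
    and c0: "c \<ge> 0" and ql: "\<And>e. a0 * (e \<bullet> e) \<le> Bl \<phi> N ts \<mu> e \<bullet> e"
  shows "DVf \<beta> \<gamma> \<phi> \<theta>s N ts \<mu> z (sys3 \<phi> \<theta>s N ts \<beta> \<gamma> \<mu> s z) \<le> - c * Vf \<beta> \<gamma> \<phi> \<theta>s N ts \<mu> z"
proof (rule dec_common[OF b g a0 c1 c2 c0 ql])
  define e where "e = fst z - \<theta>s"
  define f where "f = snd z - \<theta>s"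
  have uu: "(f - e) \<bullet> (f - e) = f \<bullet> f - 2*(e \<bullet> f) + e \<bullet> e"
    using inner_sq_expand[of f 1 e] by simp
  have "0 \<le> (f - e) \<bullet> (f - e)" by simp
  then have "- \<beta>\<^sup>2 * ((f - e) \<bullet> (f - e)) \<le> -(\<beta>\<^sup>2/2)*((f - e) \<bullet> (f - e))" by simp
  then show "DVf \<beta> \<gamma> \<phi> \<theta>s N ts \<mu> z (sys3 \<phi> \<theta>s N ts \<beta> \<gamma> \<mu> s z) \<le> -(\<beta>\<^sup>2/2)*((snd z - \<theta>s - (fst z - \<theta>s)) \<bullet> (snd z - \<theta>s - (fst z - \<theta>s))) - \<beta>*\<gamma>*(Bl \<phi> N ts \<mu> (fst z - \<theta>s) \<bullet> (fst z - \<theta>s))"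
    unfolding D_sys3 e_def[symmetric] f_def[symmetric] uu[symmetric] by simp
qed

lemma dec2:
  fixes \<phi> :: "real \<Rightarrow> real^'n" and \<theta>s :: "real^'n" and z :: "(real^'n) \<times> (real^'n)"
  assumes b: "\<beta> > 0" and g: "\<gamma> > 0" and mu: "\<mu> > 0" and bm: "2*\<gamma> \<le> \<beta>*\<mu>"
    and a0: "a0 > 0" and c1: "c \<le> \<beta>/4" and c2: "c \<le> 2*\<gamma>*a0/3"
    and c0: "c \<ge> 0" and ql: "\<And>e. a0 * (e \<bullet> e) \<le> Bl \<phi> N ts \<mu> e \<bullet> e"
  shows "DVf \<beta> \<gamma> \<phi> \<theta>s N ts \<mu> z (sys2 \<phi> \<theta>s N ts \<beta> \<gamma> \<mu> s z) \<le> - c * Vf \<beta> \<gamma> \<phi> \<theta>s N ts \<mu> z"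
proof (rule dec_common[OF b g a0 c1 c2 c0 ql])
  define e where "e = fst z - \<theta>s"
  define f where "f = snd z - \<theta>s"
  define p where "p = \<phi> s"
  define NN where "NN = Nrm \<phi> \<mu> s"
  have NNe: "NN = 1 + \<mu> * (p \<bullet> p)" unfolding NN_def Nrm_def p_def ..
  have pp0: "p \<bullet> p \<ge> 0" by simp
  have N1: "NN \<ge> 1" using NNe mu pp0 by simp
  have uu: "(f - e) \<bullet> (f - e) = f \<bullet> f - 2*(e \<bullet> f) + e \<bullet> e"
    using inner_sq_expand[of f 1 e] by simp
  have uu0: "0 \<le> (f - e) \<bullet> (f - e)" by simp
  have cs: "(p \<bullet> f - p \<bullet> e)\<^sup>2 \<le> (p \<bullet> p) * ((f - e) \<bullet> (f - e))"
    using Cauchy_Schwarz_ineq[of p "f - e"] by (simp add: inner_diff_right)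
  have pN: "2*\<gamma>*(p \<bullet> p) \<le> \<beta>*NN"
  proof -
    have "2*\<gamma>*(p \<bullet> p) \<le> \<beta>*\<mu>*(p \<bullet> p)" by (rule mult_right_mono[OF bm pp0])
    then show ?thesis using NNe b by (simp add: algebra_simps)
  qed
  have cr: "- \<beta>*\<gamma>*(2*(p \<bullet> e)*(p \<bullet> f) - (p \<bullet> e)\<^sup>2)/NN \<le> (\<beta>\<^sup>2/2)*((f - e) \<bullet> (f - e))"
    by (rule cross_core[OF b g N1 pN cs uu0])
  have D: "DVf \<beta> \<gamma> \<phi> \<theta>s N ts \<mu> z (sys2 \<phi> \<theta>s N ts \<beta> \<gamma> \<mu> s z)
     = - \<beta>\<^sup>2 * ((f - e) \<bullet> (f - e))
       - \<beta>*\<gamma>*(2*(p \<bullet> e)*(p \<bullet> f) - (p \<bullet> e)\<^sup>2) / NN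
       - \<beta>*\<gamma>*(Bl \<phi> N ts \<mu> e \<bullet> e)"
  proof -
    have D0: "DVf \<beta> \<gamma> \<phi> \<theta>s N ts \<mu> z (sys2 \<phi> \<theta>s N ts \<beta> \<gamma> \<mu> s z)
     = - \<beta>\<^sup>2 * (f \<bullet> f - 2*(e \<bullet> f) + e \<bullet> e)
       - \<beta>*\<gamma>*(2*(p \<bullet> e)*(p \<bullet> f) - (p \<bullet> e)\<^sup>2) * inverse NN
       - \<beta>*\<gamma>*(Bl \<phi> N ts \<mu> e \<bullet> e)"
      unfolding e_def f_def p_def by (rule D_sys2[OF NN_def]) (use N1 in simp)
    show ?thesis unfolding uu divide_inverse by (rule D0)
  qed
  show "DVf \<beta> \<gamma> \<phi> \<theta>s N ts \<mu> z (sys2 \<phi> \<theta>s N ts \<beta> \<gamma> \<mu> s z) \<le> -(\<beta>\<^sup>2/2)*((snd z - \<theta>s - (fst z - \<theta>s)) \<bullet> (snd z - \<theta>s - (fst z - \<theta>s))) - \<beta>*\<gamma>*(Bl \<phi> N ts \<mu> (fst z - \<theta>s) \<bullet> (fst z - \<theta>s))"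
  proof -
    define X where "X = 2*(p \<bullet> e)*(p \<bullet> f) - (p \<bullet> e)\<^sup>2"
    define U where "U = (f - e) \<bullet> (f - e)"
    have eqT: "- \<beta>*\<gamma>*X/NN = - (\<beta>*\<gamma>*X/NN)" by simp
    have crT: "- (\<beta>*\<gamma>*X/NN) \<le> (\<beta>\<^sup>2/2)*U" using cr eqT unfolding X_def U_def by linarith
    have h: "(\<beta>\<^sup>2/2)*U = (\<beta>\<^sup>2*U)/2" "\<beta>\<^sup>2*U = - (-\<beta>\<^sup>2*U)" by simp_all
    show ?thesis unfolding D e_def[symmetric] f_def[symmetric] X_def[symmetric] U_def[symmetric]
      using crT h by linarith
  qed
qed

lemma dec1:
  fixes \<phi> :: "real \<Rightarrow> real^'n" and \<theta>s :: "real^'n" and z :: "(real^'n) \<times> (real^'n)"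
  assumes b: "\<beta> > 0" and g: "\<gamma> > 0" and mu: "\<mu> > 0" and bm: "2*\<gamma> \<le> \<beta>*\<mu>"
    and a0: "a0 > 0" and c1: "c \<le> \<beta>/4" and c2: "c \<le> 2*\<gamma>*a0/3"
    and c0: "c \<ge> 0" and ql: "\<And>e. a0 * (e \<bullet> e) \<le> Bl \<phi> N ts \<mu> e \<bullet> e"
    and Vnn: "Vf \<beta> \<gamma> \<phi> \<theta>s N ts \<mu> z \<ge> 0"
  shows "DVf \<beta> \<gamma> \<phi> \<theta>s N ts \<mu> z (sys1 \<phi> \<theta>s N ts \<beta> \<gamma> \<mu> s z) \<le> - c * Vf \<beta> \<gamma> \<phi> \<theta>s N ts \<mu> z"
proof -
  define NN where "NN = Nrm \<phi> \<mu> s"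
  have N1: "NN \<ge> 1" unfolding NN_def Nrm_def using mu by simp
  have d2: "DVf \<beta> \<gamma> \<phi> \<theta>s N ts \<mu> z (sys2 \<phi> \<theta>s N ts \<beta> \<gamma> \<mu> s z) \<le> - c * Vf \<beta> \<gamma> \<phi> \<theta>s N ts \<mu> z"
    by (rule dec2[OF b g mu bm a0 c1 c2 c0 ql])
  have "DVf \<beta> \<gamma> \<phi> \<theta>s N ts \<mu> z (sys1 \<phi> \<theta>s N ts \<beta> \<gamma> \<mu> s z) = NN * DVf \<beta> \<gamma> \<phi> \<theta>s N ts \<mu> z (sys2 \<phi> \<theta>s N ts \<beta> \<gamma> \<mu> s z)"
    using sys1_sys2[of \<phi> \<mu> s] N1 linear_cmul[OF DVf_linear] unfolding NN_def by simp
  also have "\<dots> \<le> NN * (- c * Vf \<beta> \<gamma> \<phi> \<theta>s N ts \<mu> z)" by (rule mult_left_mono[OF d2]) (use N1 in simp)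
  also have "\<dots> \<le> - c * Vf \<beta> \<gamma> \<phi> \<theta>s N ts \<mu> z"
  proof -
    have "0 \<le> c * Vf \<beta> \<gamma> \<phi> \<theta>s N ts \<mu> z" using c0 Vnn by simp
    then have "1 * (c * Vf \<beta> \<gamma> \<phi> \<theta>s N ts \<mu> z) \<le> NN * (c * Vf \<beta> \<gamma> \<phi> \<theta>s N ts \<mu> z)"
      using N1 by (intro mult_right_mono) auto
    then show ?thesis by simp
  qed
  finally show ?thesis .
qed



lemma norm_sq_pair: "(norm (z - (\<theta>s, \<theta>s)))\<^sup>2 = (fst z - \<theta>s) \<bullet> (fst z - \<theta>s) + (snd z - \<theta>s) \<bullet> (snd z - \<theta>s)"
  for z :: "'a::real_inner \<times> 'a::real_inner"
proof -
  have "z - (\<theta>s, \<theta>s) = (fst z - \<theta>s, snd z - \<theta>s)" by (cases z) simp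
  then show ?thesis by (simp add: norm_Pair power2_norm_eq_inner)
qed

lemma Vf_low:
  fixes \<phi> :: "real \<Rightarrow> real^'n" and \<theta>s :: "real^'n" and z :: "(real^'n) \<times> (real^'n)"
  assumes b: "\<beta> > 0" and g: "\<gamma> \<ge> 0" and mu: "\<mu> \<ge> 0"
  shows "\<beta>/6 * (norm (z - (\<theta>s, \<theta>s)))\<^sup>2 \<le> Vf \<beta> \<gamma> \<phi> \<theta>s N ts \<mu> z"
proof -
  define e where "e = fst z - \<theta>s"
  define f where "f = snd z - \<theta>s"
  have w: "0 \<le> (f - (3/5) *\<^sub>R e) \<bullet> (f - (3/5) *\<^sub>R e)" by simp
  have gg: "(f - (1/2) *\<^sub>R e) \<bullet> (f - (1/2) *\<^sub>R e) = f \<bullet> f - e \<bullet> f + e \<bullet> e / 4"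
    unfolding inner_sq_expand by (simp add: power2_eq_square)
  show ?thesis unfolding norm_sq_pair Vf_expand e_def[symmetric] f_def[symmetric] gg
    by (rule low_scalar[OF b g Bl_q_nonneg[OF mu]]) (use w in \<open>simp_all add: inner_sq_expand power2_eq_square\<close>)
qed

lemma Vf_up:
  fixes \<phi> :: "real \<Rightarrow> real^'n" and \<theta>s :: "real^'n" and z :: "(real^'n) \<times> (real^'n)"
  assumes b: "\<beta> > 0" and g: "\<gamma> \<ge> 0" and mu: "\<mu> \<ge> 0"
  shows "Vf \<beta> \<gamma> \<phi> \<theta>s N ts \<mu> z \<le> (3*\<beta> + \<gamma>*(\<Sum>k<N. wt \<phi> ts \<mu> k * (\<phi> (ts k) \<bullet> \<phi> (ts k)))) * (norm (z - (\<theta>s, \<theta>s)))\<^sup>2"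
proof -
  define e where "e = fst z - \<theta>s"
  define f where "f = snd z - \<theta>s"
  have w0: "0 \<le> (f - (-1/2) *\<^sub>R e) \<bullet> (f - (-1/2) *\<^sub>R e)" by simp
  have w1: "(f - (-1/2) *\<^sub>R e) \<bullet> (f - (-1/2) *\<^sub>R e) = f \<bullet> f - 2*(-1/2)*(e \<bullet> f) + (-1/2)\<^sup>2*(e \<bullet> e)"
    by (rule inner_sq_expand)
  have w2: "f \<bullet> f - 2*(-1/2)*(e \<bullet> f) + (-1/2)\<^sup>2*(e \<bullet> e) = f \<bullet> f + e \<bullet> f + e \<bullet> e / 4"
    by (simp add: power2_eq_square)
  have w: "0 \<le> f \<bullet> f + e \<bullet> f + e \<bullet> e / 4" using w0 unfolding w1 w2 .
  have gg: "(f - (1/2) *\<^sub>R e) \<bullet> (f - (1/2) *\<^sub>R e) = f \<bullet> f - e \<bullet> f + e \<bullet> e / 4"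
    unfolding inner_sq_expand by (simp add: power2_eq_square)
  have am: "0 \<le> (\<Sum>k<N. wt \<phi> ts \<mu> k * (\<phi> (ts k) \<bullet> \<phi> (ts k)))"
    by (intro sum_nonneg mult_nonneg_nonneg) (simp_all add: wt_pos[OF mu] less_imp_le)
  have ee: "0 \<le> e \<bullet> e" and ff: "0 \<le> f \<bullet> f" by simp_all
  show ?thesis unfolding norm_sq_pair Vf_expand e_def[symmetric] f_def[symmetric] gg
    by (rule up_scalar[OF b g Bl_q_upper[OF mu] am w ee ff])
qed

lemma reg_gen:
  assumes pc: "piecewise_continuous_on_halfline \<phi>"
    and cont: "\<And>t y. continuous (at t within {0..}) \<phi> \<Longrightarrow> continuous (at t within {0..}) y \<Longrightarrow> continuous (at t within {0..}) (\<lambda>s. F s (y s))"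
  shows "\<And>b. b \<ge> 0 \<Longrightarrow> \<exists>S. finite S \<and> (\<forall>t\<in>{0..b}-S. \<forall>y. continuous (at t within {0..}) y \<longrightarrow> continuous (at t within {0..}) (\<lambda>s. F s (y s)))"
proof -
  fix b :: real assume "b \<ge> 0"
  then obtain S where "finite S" "\<forall>t\<in>{0..b} - S. continuous (at t within {0..}) \<phi>"
    using pc unfolding piecewise_continuous_on_halfline_def by blast
  then show "\<exists>S. finite S \<and> (\<forall>t\<in>{0..b}-S. \<forall>y. continuous (at t within {0..}) y \<longrightarrow> continuous (at t within {0..}) (\<lambda>s. F s (y s)))"
    using cont by blast
qed

lemma cont_sys:
  fixes \<phi> :: "real \<Rightarrow> real^'n" and y :: "real \<Rightarrow> (real^'n) \<times> (real^'n)"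
  assumes mu: "\<mu> \<ge> 0" and c1: "continuous (at t within {0..}) \<phi>" and c2: "continuous (at t within {0..}) y"
  shows "continuous (at t within {0..}) (\<lambda>s. sys1 \<phi> \<theta>s N ts \<beta> \<gamma> \<mu> s (y s))"
    and "continuous (at t within {0..}) (\<lambda>s. sys2 \<phi> \<theta>s N ts \<beta> \<gamma> \<mu> s (y s))"
    and "continuous (at t within {0..}) (\<lambda>s. sys3 \<phi> \<theta>s N ts \<beta> \<gamma> \<mu> s (y s))"
  unfolding sys1_def sys2_def sys3_def Let_def Nrm_def Bterm_def
  using c1 c2 mu by (auto intro!: continuous_intros add_pos_nonneg simp: add_nonneg_eq_0_iff)



theorem mainTheorem8:
  fixes \<phi> :: "real \<Rightarrow> real^'n" and \<theta>s :: "real^'n"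
    and N :: nat and ts :: "nat \<Rightarrow> real" and \<beta> \<gamma> \<mu> :: real
  assumes pc: "piecewise_continuous_on_halfline \<phi>"
    and bnd: "\<exists>M. \<forall>t\<ge>0. norm (\<phi> t) \<le> M"
    and ts_nonneg: "\<forall>k<N. ts k \<ge> 0"
    and rank: "dim ((\<lambda>k. \<phi> (ts k)) ` {..<N}) = CARD('n)"
  shows "(\<beta> > 0 \<and> \<gamma> > 0 \<and> \<mu> > 0 \<and> \<beta> \<ge> 2 * \<gamma> / \<mu> \<longrightarrow>
            UGES (sys1 \<phi> \<theta>s N ts \<beta> \<gamma> \<mu>) (\<theta>s, \<theta>s))
       \<and> (\<beta> > 0 \<and> \<gamma> > 0 \<and> \<mu> > 0 \<and> \<beta> \<ge> 2 * \<gamma> / \<mu> \<longrightarrow>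
            UGES (sys2 \<phi> \<theta>s N ts \<beta> \<gamma> \<mu>) (\<theta>s, \<theta>s))
       \<and> (\<beta> > 0 \<and> \<gamma> > 0 \<and> \<mu> \<ge> 0 \<longrightarrow>
            UGES (sys3 \<phi> \<theta>s N ts \<beta> \<gamma> \<mu>) (\<theta>s, \<theta>s))"
proof -
  have gen: "UGES F (\<theta>s, \<theta>s)"
    if b: "\<beta> > 0" and g: "\<gamma> > 0" and mu: "\<mu> \<ge> 0"
      and regF: "\<And>t y. continuous (at t within {0..}) \<phi> \<Longrightarrow> continuous (at t within {0..}) y \<Longrightarrow> continuous (at t within {0..}) (\<lambda>s. F s (y s))"
      and decF: "\<And>a0 c z s. a0 > 0 \<Longrightarrow> (\<And>e. a0 * (e \<bullet> e) \<le> Bl \<phi> N ts \<mu> e \<bullet> e) \<Longrightarrow> 0 \<le> c \<Longrightarrow> c \<le> \<beta>/4 \<Longrightarrow> c \<le> 2*\<gamma>*a0/3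
            \<Longrightarrow> DVf \<beta> \<gamma> \<phi> \<theta>s N ts \<mu> z (F s z) \<le> - c * Vf \<beta> \<gamma> \<phi> \<theta>s N ts \<mu> z"
    for F
  proof -
    obtain a0 where a0: "a0 > 0" and ql: "\<And>e. a0 * (e \<bullet> e) \<le> Bl \<phi> N ts \<mu> e \<bullet> e"
      using Bl_q_lower[OF mu rank] by blast
    define c where "c = min (\<beta>/4) (2*\<gamma>*a0/3)"
    have c0: "c > 0" unfolding c_def using b g a0 by simp
    have c1: "c \<le> \<beta>/4" and c2: "c \<le> 2*\<gamma>*a0/3" unfolding c_def by simp_all
    show ?thesis
      apply (rule lyap_UGES[where V="Vf \<beta> \<gamma> \<phi> \<theta>s N ts \<mu>" and DV="DVf \<beta> \<gamma> \<phi> \<theta>s N ts \<mu>" and c=c and m="\<beta>/6"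
            and K="3*\<beta> + \<gamma>*(\<Sum>k<N. wt \<phi> ts \<mu> k * (\<phi> (ts k) \<bullet> \<phi> (ts k)))"])
            apply (rule reg_gen[OF pc regF]; assumption)
           apply (rule Vf_deriv)
          apply (rule decF[OF a0 ql less_imp_le[OF c0] c1 c2])
         apply (rule c0)
        using b apply simp
       apply (rule Vf_low[OF b less_imp_le[OF g] mu])
      apply (rule Vf_up[OF b less_imp_le[OF g] mu])
      done
  qed
  have bm: "2*\<gamma> \<le> \<beta>*\<mu>" if "\<mu> > 0" "\<beta> \<ge> 2 * \<gamma> / \<mu>"
    using that by (simp add: divide_le_eq mult.commute)
  show ?thesis
  proof (intro conjI impI)
    assume h: "\<beta> > 0 \<and> \<gamma> > 0 \<and> \<mu> > 0 \<and> \<beta> \<ge> 2 * \<gamma> / \<mu>"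
    then have b: "\<beta> > 0" and g: "\<gamma> > 0" and mu: "\<mu> > 0" and bm': "2*\<gamma> \<le> \<beta>*\<mu>" using bm by auto
    show "UGES (sys1 \<phi> \<theta>s N ts \<beta> \<gamma> \<mu>) (\<theta>s, \<theta>s)"
    proof (rule gen[OF b g less_imp_le[OF mu]])
      fix t and y :: "real \<Rightarrow> (real^'n) \<times> (real^'n)" assume "continuous (at t within {0..}) \<phi>" "continuous (at t within {0..}) y"
      then show "continuous (at t within {0..}) (\<lambda>s. sys1 \<phi> \<theta>s N ts \<beta> \<gamma> \<mu> s (y s))"
        by (rule cont_sys(1)[OF less_imp_le[OF mu]])
    next
      fix a0 c s and z :: "(real^'n) \<times> (real^'n)" assume "a0 > 0" "\<And>e. a0 * (e \<bullet> e) \<le> Bl \<phi> N ts \<mu> e \<bullet> e" "0 \<le> c" "c \<le> \<beta>/4" "c \<le> 2*\<gamma>*a0/3"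
      note hy = this
      have v0: "0 \<le> \<beta>/6*(norm (z - (\<theta>s,\<theta>s)))\<^sup>2" using b by simp
      have Vnn: "0 \<le> Vf \<beta> \<gamma> \<phi> \<theta>s N ts \<mu> z"
        using v0 Vf_low[OF b less_imp_le[OF g] less_imp_le[OF mu], where z=z and \<phi>=\<phi> and \<theta>s=\<theta>s and N=N and ts=ts] by linarith
      show "DVf \<beta> \<gamma> \<phi> \<theta>s N ts \<mu> z (sys1 \<phi> \<theta>s N ts \<beta> \<gamma> \<mu> s z) \<le> - c * Vf \<beta> \<gamma> \<phi> \<theta>s N ts \<mu> z"
        by (rule dec1[OF b g mu bm' hy(1) hy(4) hy(5) hy(3) hy(2) Vnn])
    qed
  next
    assume h: "\<beta> > 0 \<and> \<gamma> > 0 \<and> \<mu> > 0 \<and> \<beta> \<ge> 2 * \<gamma> / \<mu>"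
    then have b: "\<beta> > 0" and g: "\<gamma> > 0" and mu: "\<mu> > 0" and bm': "2*\<gamma> \<le> \<beta>*\<mu>" using bm by auto
    show "UGES (sys2 \<phi> \<theta>s N ts \<beta> \<gamma> \<mu>) (\<theta>s, \<theta>s)"
    proof (rule gen[OF b g less_imp_le[OF mu]])
      fix t and y :: "real \<Rightarrow> (real^'n) \<times> (real^'n)" assume "continuous (at t within {0..}) \<phi>" "continuous (at t within {0..}) y"
      then show "continuous (at t within {0..}) (\<lambda>s. sys2 \<phi> \<theta>s N ts \<beta> \<gamma> \<mu> s (y s))"
        by (rule cont_sys(2)[OF less_imp_le[OF mu]])
    next
      fix a0 c s and z :: "(real^'n) \<times> (real^'n)" assume "a0 > 0" "\<And>e. a0 * (e \<bullet> e) \<le> Bl \<phi> N ts \<mu> e \<bullet> e" "0 \<le> c" "c \<le> \<beta>/4" "c \<le> 2*\<gamma>*a0/3"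
      then show "DVf \<beta> \<gamma> \<phi> \<theta>s N ts \<mu> z (sys2 \<phi> \<theta>s N ts \<beta> \<gamma> \<mu> s z) \<le> - c * Vf \<beta> \<gamma> \<phi> \<theta>s N ts \<mu> z"
        using dec2[OF b g mu bm'] by blast
    qed
  next
    assume h: "\<beta> > 0 \<and> \<gamma> > 0 \<and> \<mu> \<ge> 0"
    then have b: "\<beta> > 0" and g: "\<gamma> > 0" and mu: "\<mu> \<ge> 0" by auto
    show "UGES (sys3 \<phi> \<theta>s N ts \<beta> \<gamma> \<mu>) (\<theta>s, \<theta>s)"
    proof (rule gen[OF b g mu])
      fix t and y :: "real \<Rightarrow> (real^'n) \<times> (real^'n)" assume "continuous (at t within {0..}) \<phi>" "continuous (at t within {0..}) y"
      then show "continuous (at t within {0..}) (\<lambda>s. sys3 \<phi> \<theta>s N ts \<beta> \<gamma> \<mu> s (y s))"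
        by (rule cont_sys(3)[OF mu])
    next
      fix a0 c s and z :: "(real^'n) \<times> (real^'n)" assume "a0 > 0" "\<And>e. a0 * (e \<bullet> e) \<le> Bl \<phi> N ts \<mu> e \<bullet> e" "0 \<le> c" "c \<le> \<beta>/4" "c \<le> 2*\<gamma>*a0/3"
      then show "DVf \<beta> \<gamma> \<phi> \<theta>s N ts \<mu> z (sys3 \<phi> \<theta>s N ts \<beta> \<gamma> \<mu> s z) \<le> - c * Vf \<beta> \<gamma> \<phi> \<theta>s N ts \<mu> z"
        using dec3[OF b g] by blast
    qed
  qed
qed


end
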